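(* Let $n,m,k$ be positive integers with $k\mid n$, let $p\in(0,1/2)$, and let $\mu_1,\dots,\mu_k\in\{0,1\}^m$ be fixed ground-truth mindsets. Let $V=V_1\sqcup\dots\sqcup V_k$ be a population with $|V_i|=n/k$, where every person $v\in V_i$ answers question $s\in\{1,\dots,m\}$ with $v(s)=\mu_i(s)$ with probability $1-p$ and $v(s)=1-\mu_i(s)$ with probability $p$, independently across persons and questions. Let $\mathcal P$ be the set of $m$ cuts $\{A_s^0,A_s^1\}$, $s=1,\dots,m$, where $A_s^y=\{v\in V: v(s)=y\}$. Let $a\in\mathbb N$ be the agreement parameter, and assume $p<1/(k+3)$ and $a\in\bigl(pn,\,(1-3p)n/k\bigr)$. Then: (1) The probability that at least one of the mindsets $\mu_i$ does not induce a $\mathcal P$-tangle is at most $k\,m\,\exp\!\bigl(-2n(ka/n-1+3p)^2/(9k)\bigr)$. (2) If the mindsets $\mu_1,\dots,\mu_k$ satisfy the non-degeneracy assumption, then the probability that there exists a $\mathcal P$-tangle which is not equal to any of $\mu_1,\dots,\mu_k$ is at most $k\,m\,\exp\!\bigl(-2n(a/n-p)^2/k\bigr)$. Both probabilities are over the random answers of the persons (the mindsets being fixed).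
   Context: An orientation of $\mathcal P$ chooses one side of every cut; it is identified with a vector $\tau\in\{0,1\}^m$ by choosing the side $A_s^{\tau(s)}$ of the cut for question $s$. For the agreement parameter $a$, an orientation $O$ is a $\mathcal P$-tangle (is consistent) if for all (not necessarily distinct) chosen sides $A,B,C\in O$ we have $|A\cap B\cap C|\ge a$. A mindset $\mu_i$ induces a tangle if the orientation corresponding to $\mu_i$ is a $\mathcal P$-tangle. Non-degeneracy assumption: whenever $\tau\in\{0,1\}^m$ has the property that for all $x,y,z\in\{1,\dots,m\}$ there exists a mindset $\mu_i$ with $\tau(x)=\mu_i(x)$, $\tau(y)=\mu_i(y)$ and $\tau(z)=\mu_i(z)$, then $\tau=\mu_j$ for some $j$. *)

theory Defs
  imports "HOL-Probability.Probability"
begin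

text \<open>Population V = {0..<n}; person v belongs to group g v (groups 0..<k).
  Questions are 0..<m. Mindsets mu i :: nat => bool for i < k (True = answer 1).
  A random answer profile is ans :: nat * nat => bool, ans (v,s) = v(s).\<close>

definition answer_pmf ::
  "nat \<Rightarrow> nat \<Rightarrow> (nat \<Rightarrow> nat) \<Rightarrow> (nat \<Rightarrow> nat \<Rightarrow> bool) \<Rightarrow> real \<Rightarrow> (nat \<times> nat \<Rightarrow> bool) pmf" where
  "answer_pmf n m g mu p =
     Pi_pmf ({0..<n} \<times> {0..<m}) False
       (\<lambda>(v, s). map_pmf (\<lambda>flip. if flip then \<not> mu (g v) s else mu (g v) s)
                        (bernoulli_pmf p))"

definition side :: "nat \<Rightarrow> (nat \<times> nat \<Rightarrow> bool) \<Rightarrow> nat \<Rightarrow> bool \<Rightarrow> nat set" where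
  "side n ans s y = {v \<in> {0..<n}. ans (v, s) = y}"

definition is_tangle ::
  "nat \<Rightarrow> nat \<Rightarrow> nat \<Rightarrow> (nat \<times> nat \<Rightarrow> bool) \<Rightarrow> (nat \<Rightarrow> bool) \<Rightarrow> bool" where
  "is_tangle n m a ans tau \<longleftrightarrow>
     (\<forall>x<m. \<forall>y<m. \<forall>z<m.
        card (side n ans x (tau x) \<inter> side n ans y (tau y) \<inter> side n ans z (tau z)) \<ge> a)"

definition non_degenerate :: "nat \<Rightarrow> nat \<Rightarrow> (nat \<Rightarrow> nat \<Rightarrow> bool) \<Rightarrow> bool" where
  "non_degenerate k m mu \<longleftrightarrow>
     (\<forall>tau :: nat \<Rightarrow> bool.
        (\<forall>x<m. \<forall>y<m. \<forall>z<m. \<exists>i<k.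
            tau x = mu i x \<and> tau y = mu i y \<and> tau z = mu i z)
        \<longrightarrow> (\<exists>j<k. \<forall>s<m. tau s = mu j s))"

end

theory Submission
  imports Defs
begin

lemma cnt_binomial:
  fixes n m i s :: nat and g :: "nat \<Rightarrow> nat" and mu :: "nat \<Rightarrow> nat \<Rightarrow> bool"
  assumes s: "s < m" and p: "0 \<le> p" "p \<le> 1"
  defines "B \<equiv> {v \<in> {0..<n}. g v = i} \<times> {s}"
  shows "map_pmf (\<lambda>ans. card {x\<in>B. ans x \<noteq> mu i s}) (answer_pmf n m g mu p)
         = binomial_pmf (card B) p"
proof -
  let ?D = "{0..<n} \<times> {0..<m}"
  let ?c = "mu i s"
  let ?F = "\<lambda>(v, s). map_pmf (\<lambda>flip. if flip then \<not> mu (g v) s else mu (g v) s) (bernoulli_pmf p)"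
  have BD: "B \<subseteq> ?D" using s by (auto simp: B_def)
  have finB: "finite B" unfolding B_def by auto
  have "map_pmf (\<lambda>ans. card {x\<in>B. ans x \<noteq> ?c}) (answer_pmf n m g mu p)
      = map_pmf (\<lambda>ans. card {x\<in>B. ans x \<noteq> ?c})
          (map_pmf (\<lambda>f x. if x \<in> B then f x else False) (answer_pmf n m g mu p))"
    by (simp add: pmf.map_comp o_def cong: conj_cong)
  also have "map_pmf (\<lambda>f x. if x \<in> B then f x else False) (answer_pmf n m g mu p)
      = Pi_pmf B False ?F"
    unfolding answer_pmf_def by (rule Pi_pmf_subset[symmetric]) (use BD in auto)
  also have "Pi_pmf B False ?F = Pi_pmf B False (\<lambda>_. map_pmf (\<lambda>flip. flip \<noteq> ?c) (bernoulli_pmf p))"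
    by (rule Pi_pmf_cong) (auto simp: B_def intro!: map_pmf_cong)
  also have "\<dots> = map_pmf (\<lambda>h. (\<lambda>flip. flip \<noteq> ?c) \<circ> h) (Pi_pmf B ?c (\<lambda>_. bernoulli_pmf p))"
    by (rule Pi_pmf_map) (use finB in auto)
  also have "map_pmf (\<lambda>ans. card {x\<in>B. ans x \<noteq> ?c}) \<dots>
       = map_pmf (\<lambda>h. card {x\<in>B. h x}) (Pi_pmf B ?c (\<lambda>_. bernoulli_pmf p))"
    by (simp add: pmf.map_comp o_def, intro map_pmf_cong refl arg_cong[where f=card]) blast
  also have "\<dots> = binomial_pmf (card B) p"
    by (rule binomial_pmf_altdef'[symmetric]) (use finB p in auto)
  finally show ?thesis .
qed


lemma cnt_tail:
  fixes n m i s N :: nat and g :: "nat \<Rightarrow> nat" and mu :: "nat \<Rightarrow> nat \<Rightarrow> bool"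
  assumes s: "s < m" and p: "0 \<le> p" "p \<le> 1" and N: "card {v \<in> {0..<n}. g v = i} = N" "N > 0"
    and e: "e \<ge> 0"
  shows "measure_pmf.prob (answer_pmf n m g mu p)
     {ans. real N * p + e \<le> real (card {v \<in> {0..<n}. g v = i \<and> ans (v, s) \<noteq> mu i s})}
     \<le> exp (-2 * e\<^sup>2 / N)"
proof -
  define B where "B = {v \<in> {0..<n}. g v = i} \<times> {s}"
  have cB: "card B = N" unfolding B_def using N by (simp add: card_cartesian_product)
  have eq: "card {v \<in> {0..<n}. g v = i \<and> ans (v, s) \<noteq> mu i s} = card {x\<in>B. ans x \<noteq> mu i s}" for ans
  proof -
    have "{x\<in>B. ans x \<noteq> mu i s} = (\<lambda>v. (v, s)) ` {v \<in> {0..<n}. g v = i \<and> ans (v, s) \<noteq> mu i s}"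
      unfolding B_def by auto
    then show ?thesis by (simp add: card_image inj_on_def)
  qed
  have "measure_pmf.prob (answer_pmf n m g mu p)
     {ans. real N * p + e \<le> real (card {v \<in> {0..<n}. g v = i \<and> ans (v, s) \<noteq> mu i s})}
     = measure_pmf.prob (map_pmf (\<lambda>ans. card {x\<in>B. ans x \<noteq> mu i s}) (answer_pmf n m g mu p))
        {x. real N * p + e \<le> real x}"
    unfolding eq by (simp add: vimage_def)
  also have "\<dots> = measure_pmf.prob (binomial_pmf N p) {x. real x \<ge> real N * p + e}"
    using cnt_binomial[OF s p, of n g i mu] cB unfolding B_def by simp
  also have "\<dots> \<le> exp (-2 * e\<^sup>2 / N)"
    by (rule binomial_distribution.prob_ge) (use p N e in \<open>auto simp: binomial_distribution_def\<close>)
  finally show ?thesis .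
qed


lemma union_bound:
  fixes M :: "'a pmf" and E :: "nat \<Rightarrow> nat \<Rightarrow> 'a set"
  assumes b: "\<And>i s. i < k \<Longrightarrow> s < m \<Longrightarrow> measure_pmf.prob M (E i s) \<le> b"
    and X: "X \<subseteq> (\<Union>(i, s)\<in>{..<k}\<times>{..<m}. E i s)"
  shows "measure_pmf.prob M X \<le> real k * real m * b"
proof -
  have "measure_pmf.prob M X \<le> measure_pmf.prob M (\<Union>(i, s)\<in>{..<k}\<times>{..<m}. E i s)"
    using X by (intro measure_pmf.finite_measure_mono) auto
  also have "\<dots> \<le> (\<Sum>x\<in>{..<k}\<times>{..<m}. measure_pmf.prob M (case_prod E x))"
    by (rule measure_pmf.finite_measure_subadditive_finite) auto
  also have "\<dots> \<le> (\<Sum>(i, s)\<in>{..<k}\<times>{..<m}. b)"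
    by (intro sum_mono) (auto intro: b)
  also have "\<dots> = real k * real m * b" by simp
  finally show ?thesis .
qed

theorem theorem1:
  fixes n m k a :: nat and p :: real
    and g :: "nat \<Rightarrow> nat" and mu :: "nat \<Rightarrow> nat \<Rightarrow> bool"
  assumes "n > 0" and "m > 0" and "k > 0" and "k dvd n"
    and "0 < p" and "p < 1/2"
    and "\<forall>v<n. g v < k"
    and "\<forall>i<k. card {v \<in> {0..<n}. g v = i} = n div k"
    and "p < 1 / (real k + 3)"
    and "p * real n < real a" and "real a < (1 - 3 * p) * real n / real k"
  shows "measure_pmf.prob (answer_pmf n m g mu p)
           {ans. \<exists>i<k. \<not> is_tangle n m a ans (mu i)}
         \<le> real k * real m *
            exp (- 2 * real n * (real k * real a / real n - 1 + 3 * p)^2 / (9 * real k))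
       \<and> (non_degenerate k m mu \<longrightarrow>
         measure_pmf.prob (answer_pmf n m g mu p)
           {ans. \<exists>tau. is_tangle n m a ans tau \<and> (\<forall>i<k. \<exists>s<m. tau s \<noteq> mu i s)}
         \<le> real k * real m * exp (- 2 * real n * (real a / real n - p)^2 / real k))"
proof -
  note asm = assms
  define N where "N = n div k"
  have nN: "n = k * N" using asm(4) unfolding N_def by simp
  have Npos: "N > 0" using asm(1) nN by (cases N) auto
  have rn: "real n = real k * real N" using nN by simp
  define V where "V i = {v \<in> {0..<n}. g v = i}" for i
  define cnt where "cnt i s ans = card {v \<in> {0..<n}. g v = i \<and> ans (v, s) \<noteq> mu i s}" for i s and ans :: "nat \<times> nat \<Rightarrow> bool"
  define E where "E e i s = {ans. real N * p + e \<le> real (cnt i s ans)}" for e i s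
  have cardV: "card (V i) = N" if "i < k" for i using asm(8) that unfolding V_def N_def by auto
  have tail: "measure_pmf.prob (answer_pmf n m g mu p) (E e i s) \<le> exp (-2 * e\<^sup>2 / N)"
    if "i < k" "s < m" "e \<ge> 0" for e i s
    unfolding E_def cnt_def
    by (rule cnt_tail) (use that asm cardV Npos in \<open>auto simp: V_def\<close>)
  have fin: "finite {v \<in> {0..<n}. P v}" for P by auto
  define e1 where "e1 = (real N * (1 - 3 * p) - real a) / 3"
  have "(1 - 3 * p) * real n / real k = (1 - 3 * p) * real N" unfolding rn using asm(3) by simp
  then have e1: "e1 \<ge> 0" using asm(11) unfolding e1_def by (simp add: mult.commute)
  have P1: "{ans. \<exists>i<k. \<not> is_tangle n m a ans (mu i)} \<subseteq> (\<Union>(i, s)\<in>{..<k}\<times>{..<m}. E e1 i s)"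
  proof
    fix ans assume "ans \<in> {ans. \<exists>i<k. \<not> is_tangle n m a ans (mu i)}"
    then obtain i x y z where i: "i < k" and xyz: "x < m" "y < m" "z < m"
      and lt: "card (side n ans x (mu i x) \<inter> side n ans y (mu i y) \<inter> side n ans z (mu i z)) < a"
      unfolding is_tangle_def by auto
    show "ans \<in> (\<Union>(i, s)\<in>{..<k}\<times>{..<m}. E e1 i s)"
    proof (rule ccontr)
      assume "\<not> ?thesis"
      then have c: "real (cnt i s ans) < real N * p + e1" if "s < m" for s
        using i that unfolding E_def by force
      let ?S = "side n ans x (mu i x) \<inter> side n ans y (mu i y) \<inter> side n ans z (mu i z)"
      let ?D = "\<lambda>s. {v \<in> {0..<n}. g v = i \<and> ans (v, s) \<noteq> mu i s}"
      have "V i \<subseteq> ?S \<union> ?D x \<union> ?D y \<union> ?D z" unfolding V_def side_def by auto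
      then have "card (V i) \<le> card (?S \<union> ?D x \<union> ?D y \<union> ?D z)"
        by (intro card_mono) (auto simp: side_def)
      also have "\<dots> \<le> card ?S + card (?D x) + card (?D y) + card (?D z)"
        by (meson add_le_mono card_Un_le le_trans order_refl)
      finally have "real N \<le> real (card ?S) + cnt i x ans + cnt i y ans + cnt i z ans"
        using cardV[OF i] unfolding cnt_def by linarith
      moreover have "real (card ?S) < a" using lt by simp
      ultimately show False using c[OF xyz(1)] c[OF xyz(2)] c[OF xyz(3)]
        unfolding e1_def by (simp add: field_simps)
    qed
  qed
  have ex1: "exp (-2 * e1\<^sup>2 / N) = exp (- 2 * real n * (real k * real a / real n - 1 + 3 * p)^2 / (9 * real k))"
  proof -
    have h: "real k * real a / real n - 1 + 3 * p = - 3 * e1 / real N"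
      unfolding rn e1_def using asm(3) Npos by (simp add: field_simps)
    have "- 2 * e1\<^sup>2 / real N = - 2 * real n * (- 3 * e1 / real N)^2 / (9 * real k)"
      unfolding rn using asm(3) Npos by (simp add: power_divide power_mult_distrib power2_eq_square)
    then show ?thesis unfolding h by (rule arg_cong)
  qed
  have R1: "measure_pmf.prob (answer_pmf n m g mu p) {ans. \<exists>i<k. \<not> is_tangle n m a ans (mu i)}
         \<le> real k * real m * exp (- 2 * real n * (real k * real a / real n - 1 + 3 * p)^2 / (9 * real k))"
    unfolding ex1[symmetric] by (rule union_bound[OF tail[OF _ _ e1] P1])
  define e2 where "e2 = (real a - p * real n) / real k"
  have e2: "e2 \<ge> 0" using asm(10) unfolding e2_def by simp
  have R2: "measure_pmf.prob (answer_pmf n m g mu p)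
           {ans. \<exists>tau. is_tangle n m a ans tau \<and> (\<forall>i<k. \<exists>s<m. tau s \<noteq> mu i s)}
         \<le> real k * real m * exp (- 2 * real n * (real a / real n - p)^2 / real k)"
    if nd: "non_degenerate k m mu"
  proof -
    have P2: "{ans. \<exists>tau. is_tangle n m a ans tau \<and> (\<forall>i<k. \<exists>s<m. tau s \<noteq> mu i s)}
        \<subseteq> (\<Union>(i, s)\<in>{..<k}\<times>{..<m}. E e2 i s)"
    proof
      fix ans assume "ans \<in> {ans. \<exists>tau. is_tangle n m a ans tau \<and> (\<forall>i<k. \<exists>s<m. tau s \<noteq> mu i s)}"
      then obtain tau where tg: "is_tangle n m a ans tau" and ne: "\<forall>i<k. \<exists>s<m. tau s \<noteq> mu i s"
        by auto
      have "\<exists>x y z. x < m \<and> y < m \<and> z < m \<and> (\<forall>i<k. \<not> (tau x = mu i x \<and> tau y = mu i y \<and> tau z = mu i z))"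
      proof (rule ccontr)
        assume "\<not> ?thesis"
        then have "\<forall>x<m. \<forall>y<m. \<forall>z<m. \<exists>i<k. tau x = mu i x \<and> tau y = mu i y \<and> tau z = mu i z"
          by blast
        then obtain j where "j < k" "\<forall>s<m. tau s = mu j s"
          using nd unfolding non_degenerate_def by (elim allE[of _ tau] impE) auto
        then show False using ne by auto
      qed
      then obtain x y z where xyz: "x < m" "y < m" "z < m"
        and dis: "\<forall>i<k. \<not> (tau x = mu i x \<and> tau y = mu i y \<and> tau z = mu i z)"
        by blast
      show "ans \<in> (\<Union>(i, s)\<in>{..<k}\<times>{..<m}. E e2 i s)"
      proof (rule ccontr)
        assume "\<not> ?thesis"
        then have c: "real (cnt i s ans) < real N * p + e2" if "i < k" "s < m" for i s
          using that unfolding E_def by force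
        let ?S = "side n ans x (tau x) \<inter> side n ans y (tau y) \<inter> side n ans z (tau z)"
        define si where "si i = (if tau x \<noteq> mu i x then x else if tau y \<noteq> mu i y then y else z)" for i
        have si: "si i < m" "tau (si i) \<noteq> mu i (si i)" if "i < k" for i
          using xyz dis that unfolding si_def by auto
        let ?D = "\<lambda>i. {v \<in> {0..<n}. g v = i \<and> ans (v, si i) \<noteq> mu i (si i)}"
        have "?S \<subseteq> (\<Union>i<k. ?D i)"
        proof
          fix v assume v: "v \<in> ?S"
          then have vn: "v < n" by (auto simp: side_def)
          then have gi: "g v < k" using asm(7) by auto
          have "ans (v, si (g v)) = tau (si (g v))" using v unfolding si_def side_def by auto
          then show "v \<in> (\<Union>i<k. ?D i)" using si(2)[OF gi] vn gi by auto
        qed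
        then have "card ?S \<le> card (\<Union>i<k. ?D i)" by (intro card_mono) auto
        also have "\<dots> \<le> (\<Sum>i<k. card (?D i))" by (rule card_UN_le) auto
        finally have "real (card ?S) \<le> (\<Sum>i<k. real (cnt i (si i) ans))"
          unfolding cnt_def by (simp flip: of_nat_sum)
        also have "\<dots> < (\<Sum>i<k. real N * p + e2)"
          by (rule sum_strict_mono) (use asm(3) c si in auto)
        also have "\<dots> = real a" unfolding e2_def rn using asm(3) by (simp add: field_simps)
        finally have "card ?S < a" by simp
        moreover have "card ?S \<ge> a" using tg xyz unfolding is_tangle_def by blast
        ultimately show False by simp
      qed
    qed
    have ex2: "exp (-2 * e2\<^sup>2 / N) = exp (- 2 * real n * (real a / real n - p)^2 / real k)"
    proof -
      have h: "real a / real n - p = real k * e2 / real n"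
        unfolding e2_def using asm(1,3) by (simp add: field_simps)
      have "- 2 * e2\<^sup>2 / real N = - 2 * real n * (real k * e2 / real n)^2 / real k"
        unfolding rn using asm(3) Npos by (simp add: power_divide power_mult_distrib power2_eq_square)
      then show ?thesis unfolding h by (rule arg_cong)
    qed
    show ?thesis unfolding ex2[symmetric] by (rule union_bound[OF tail[OF _ _ e2] P2])
  qed
  show ?thesis using R1 R2 by blast
qed

end
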